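(* Consider the general Int-GARCH$(p,q,w)$ model with $p>0$, $q>0$, $w\ge 0$: for integers $t$, $$r_t=h_t\cdot[\epsilon_t-\eta_t,\ \epsilon_t+\eta_t]=[\lambda_t-\delta_t,\ \lambda_t+\delta_t],\qquad \lambda_t=h_t\epsilon_t,\ \delta_t=h_t\eta_t,$$ $$h_t=\mu+\sum_{i=1}^{p}\alpha_i|\lambda_{t-i}|+\sum_{i=1}^{q}\beta_i\delta_{t-i}+\sum_{i=1}^{w}\gamma_ih_{t-i},$$ where $\mu>0$ and all $\alpha_i,\beta_i,\gamma_i$ are positive constants, $\{\epsilon_t\}$ are i.i.d. $N(0,1)$, $\{\eta_t\}$ are i.i.d. $\Gamma(k,1)$ (shape $k>0$, scale 1), the two sequences are mutually independent, and $(\epsilon_t,\eta_t)$ is independent of $\{h_s:s\le t\}$. Let $m=\max\{p,q,w\}$ and for $i=1,\dots,m$ define $$x_{i,t}=\alpha_i|\epsilon_t|\,\mathbf 1_{\{1\le i\le p\}}+\beta_i\eta_t\,\mathbf 1_{\{1\le i\le q\}}+\gamma_i\,\mathbf 1_{\{1\le i\le w\}},\qquad \mu_i=E(x_{i,t}).$$ Assume $\{r_t\}$ starts from its infinite past with a finite mean. Then $E h_t<\infty$ if and only if $\sum_{i=1}^{m}\mu_i<1$. When this holds, $$E h_t=\frac{\mu}{1-\sum_{i=1}^{m}\mu_i},\qquad E r_t=\bigl[-kE(h_t),\ kE(h_t)\bigr].$$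
   Context: Here $\cdot$ denotes scalar multiplication of an interval, and the expectation of a random interval $[\lambda-\delta,\lambda+\delta]$ is its Aumann expectation $[E\lambda-E\delta,\ E\lambda+E\delta]$. *)

theory Defs
  imports "HOL-Probability.Probability"
begin

definition gamma_density :: "real \<Rightarrow> real \<Rightarrow> real" where
  "gamma_density k x = (if 0 < x then x powr (k - 1) * exp (- x) / Gamma k else 0)"

definition igarch_x ::
  "nat \<Rightarrow> nat \<Rightarrow> nat \<Rightarrow> (nat \<Rightarrow> real) \<Rightarrow> (nat \<Rightarrow> real) \<Rightarrow> (nat \<Rightarrow> real)
   \<Rightarrow> (int \<Rightarrow> 'a \<Rightarrow> real) \<Rightarrow> (int \<Rightarrow> 'a \<Rightarrow> real) \<Rightarrow> nat \<Rightarrow> int \<Rightarrow> 'a \<Rightarrow> real" where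
  "igarch_x p q w \<alpha> \<beta> \<gamma> eps eta i t \<omega> =
     (if 1 \<le> i \<and> i \<le> p then \<alpha> i * \<bar>eps t \<omega>\<bar> else 0)
   + (if 1 \<le> i \<and> i \<le> q then \<beta> i * eta t \<omega> else 0)
   + (if 1 \<le> i \<and> i \<le> w then \<gamma> i else 0)"

text \<open>Aumann expectation of the random interval [lam - del, lam + del],
  represented as the pair (lower endpoint, upper endpoint).\<close>
definition interval_expectation ::
  "'a measure \<Rightarrow> ('a \<Rightarrow> real) \<Rightarrow> ('a \<Rightarrow> real) \<Rightarrow> real \<times> real" where
  "interval_expectation M lam del =
     (integral\<^sup>L M lam - integral\<^sup>L M del, integral\<^sup>L M lam + integral\<^sup>L M del)"

end

theory Submission
  imports Defs
begin



lemma (in prob_space) indep_var_sub: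
  assumes ind: "indep_set (sets F) (sets G)"
   and sF: "subalgebra M F" and sG: "subalgebra M G"
   and X: "X \<in> borel_measurable F" and Y: "Y \<in> borel_measurable G"
  shows "indep_var borel X borel (Y :: _ \<Rightarrow> real)"
  unfolding indep_var_eq
proof (intro conjI)
  show "random_variable borel X" using measurable_from_subalg[OF sF X] .
  show "random_variable borel Y" using measurable_from_subalg[OF sG Y] .
  have spF: "space F = space M" and spG: "space G = space M" using sF sG by (auto simp: subalgebra_def)
  have a: "sigma_sets (space M) {X -` A \<inter> space M | A. A \<in> sets borel} \<subseteq> sets F"
    unfolding spF[symmetric]
    by (rule sets.sigma_sets_subset) (use measurable_sets[OF X] in \<open>auto simp: spF\<close>)
  have b: "sigma_sets (space M) {Y -` A \<inter> space M | A. A \<in> sets borel} \<subseteq> sets G"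
    unfolding spG[symmetric]
    by (rule sets.sigma_sets_subset) (use measurable_sets[OF Y] in \<open>auto simp: spG\<close>)
  show "indep_set (sigma_sets (space M) {X -` A \<inter> space M | A. A \<in> sets borel})
                  (sigma_sets (space M) {Y -` A \<inter> space M | A. A \<in> sets borel})"
  proof (rule indep_setI)
    show "sigma_sets (space M) {X -` A \<inter> space M | A. A \<in> sets borel} \<subseteq> events"
      using a sF by (auto simp: subalgebra_def)
    show "sigma_sets (space M) {Y -` A \<inter> space M | A. A \<in> sets borel} \<subseteq> events"
      using b sG by (auto simp: subalgebra_def)
  qed (use a b ind in \<open>auto intro: indep_setD\<close>)
qed

lemma subalgebra_vimage:
  assumes "f \<in> measurable M N"
  shows "subalgebra M (vimage_algebra (space M) f N)"
  unfolding subalgebra_def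
  using assms by (auto simp: sets_vimage_algebra2 measurable_space intro: measurable_sets)

lemma gamma_density_nonneg: "k > 0 \<Longrightarrow> 0 \<le> gamma_density k x"
  by (auto simp: gamma_density_def intro!: divide_nonneg_pos Gamma_real_pos)

lemma gamma_density_mean_nn:
  assumes k: "k > 0"
  shows "(\<integral>\<^sup>+x. ennreal (gamma_density k x * x) \<partial>lborel) = ennreal k"
proof -
  have G: "Gamma k > 0" using k by (rule Gamma_real_pos)
  have eq: "\<And>x. ennreal (gamma_density k x * x) = ennreal (indicator {0..} x * x powr (k + 1 - 1) / exp x) * ennreal (1 / Gamma k)"
  proof -
    fix x :: real
    show "ennreal (gamma_density k x * x) = ennreal (indicator {0..} x * x powr (k + 1 - 1) / exp x) * ennreal (1 / Gamma k)"
    proof (cases "x > 0")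
      case True
      have "x powr (k - 1) * x = x powr k" using True by (simp add: powr_add[symmetric] powr_diff)
      then have "gamma_density k x * x = (indicator {0..} x * x powr (k + 1 - 1) / exp x) * (1 / Gamma k)"
        using True by (simp add: gamma_density_def exp_minus field_simps)
      then show ?thesis using True G by (simp add: ennreal_mult'[symmetric])
    next
      case False
      then show ?thesis using k by (cases "x = 0") (auto simp: gamma_density_def indicator_def)
    qed
  qed
  have "(\<integral>\<^sup>+x. ennreal (gamma_density k x * x) \<partial>lborel)
      = (\<integral>\<^sup>+x. ennreal (indicator {0..} x * x powr (k + 1 - 1) / exp x) \<partial>lborel) * ennreal (1 / Gamma k)"
    unfolding eq by (rule nn_integral_multc) measurable
  also have "\<dots> = ennreal (Gamma (k + 1)) * ennreal (1 / Gamma k)"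
    using Gamma_conv_nn_integral_real[of "k + 1"] k by simp
  also have "\<dots> = ennreal k"
  proof -
    have "k \<notin> \<int>\<^sub>\<le>\<^sub>0" using k by (auto elim!: nonpos_Ints_cases)
    then have "Gamma (k + 1) = k * Gamma k" by (rule Gamma_plus1)
    moreover have "Gamma k \<noteq> 0" using G by simp
    ultimately show ?thesis using k by (simp add: ennreal_mult'[symmetric])
  qed
  finally show ?thesis .
qed

lemma gamma_density_mean:
  assumes k: "k > 0"
  shows "integrable lborel (\<lambda>x. gamma_density k x * x)"
    "(\<integral>x. gamma_density k x * x \<partial>lborel) = k"
proof -
  have nn: "\<And>x. 0 \<le> gamma_density k x * x"
    using k by (auto simp: gamma_density_def intro!: mult_nonneg_nonneg divide_nonneg_pos Gamma_real_pos)
  have m: "(\<lambda>x. gamma_density k x * x) \<in> borel_measurable lborel"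
    unfolding gamma_density_def by measurable
  show "integrable lborel (\<lambda>x. gamma_density k x * x)"
    by (rule integrableI_nonneg) (use m nn gamma_density_mean_nn[OF k] in auto)
  show "(\<integral>x. gamma_density k x * x \<partial>lborel) = k"
    by (subst integral_eq_nn_integral) (use m nn gamma_density_mean_nn[OF k] k in auto)
qed

lemma eta_moments:
  assumes k: "k > 0" and d: "distributed M lborel X (\<lambda>x. ennreal (gamma_density k x))"
  shows "integrable M X" "integral\<^sup>L M X = k" "AE \<omega> in M. X \<omega> \<ge> 0"
proof -
  have nn: "\<And>x. 0 \<le> gamma_density k x" using gamma_density_nonneg[OF k] .
  show "integrable M X"
    using distributed_integrable[OF d, of "\<lambda>x. x"] nn gamma_density_mean(1)[OF k] by simp
  show "integral\<^sup>L M X = k"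
    using distributed_integral[OF d, of "\<lambda>x. x"] nn gamma_density_mean(2)[OF k] by simp
  have Xm: "X \<in> borel_measurable M" using d by (simp add: distributed_def)
  have eqd: "distr M lborel X = density lborel (\<lambda>x. ennreal (gamma_density k x))"
    using d by (simp add: distributed_def)
  have "AE x in distr M lborel X. x \<ge> 0"
    unfolding eqd by (subst AE_density) (auto simp: gamma_density_def intro!: AE_I2)
  then show "AE \<omega> in M. X \<omega> \<ge> 0"
    using Xm by (intro AE_distrD[of X M lborel]) auto
qed

lemma eps_moments:
  assumes d: "distributed M lborel X (\<lambda>x. ennreal (std_normal_density x))"
  shows "integrable M X" "integral\<^sup>L M X = 0" "integrable M (\<lambda>\<omega>. \<bar>X \<omega>\<bar>)"
    "integral\<^sup>L M (\<lambda>\<omega>. \<bar>X \<omega>\<bar>) = (\<integral>x. std_normal_density x * \<bar>x\<bar> \<partial>lborel)"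
proof -
  have nn: "\<And>x. 0 \<le> std_normal_density x" by (simp add: normal_density_nonneg)
  show "integrable M X"
    using distributed_integrable[OF d, of "\<lambda>x. x"] nn integrable_std_normal_moment[of 1] by simp
  show "integral\<^sup>L M X = 0"
    using distributed_integral[OF d, of "\<lambda>x. x"] nn integral_std_normal_moment_odd[of 0] by simp
  show "integrable M (\<lambda>\<omega>. \<bar>X \<omega>\<bar>)"
    using distributed_integrable[OF d, of "\<lambda>x. \<bar>x\<bar>"] nn integrable_std_normal_moment_abs[of 1] by simp
  show "integral\<^sup>L M (\<lambda>\<omega>. \<bar>X \<omega>\<bar>) = (\<integral>x. std_normal_density x * \<bar>x\<bar> \<partial>lborel)"
    using distributed_integral[OF d, of "\<lambda>x. \<bar>x\<bar>"] nn by simp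
qed

lemma sum_if_le:
  fixes p m :: nat
  assumes "p \<le> m"
  shows "(\<Sum>i=1..m. if 1 \<le> i \<and> i \<le> p then f i else (0::real)) = (\<Sum>i=1..p. f i)"
proof -
  have "(\<Sum>i=1..m. if 1 \<le> i \<and> i \<le> p then f i else (0::real)) = (\<Sum>i\<in>{i\<in>{1..m}. 1 \<le> i \<and> i \<le> p}. f i)"
    by (rule sum.inter_filter[symmetric]) simp
  also have "{i\<in>{1..m}. 1 \<le> i \<and> i \<le> p} = {1..p}" using assms by auto
  finally show ?thesis .
qed

function Gf :: "(nat \<Rightarrow> int \<Rightarrow> 'a \<Rightarrow> real) \<Rightarrow> nat \<Rightarrow> int \<Rightarrow> real \<Rightarrow> (nat \<Rightarrow> 'a \<Rightarrow> real) \<Rightarrow> nat \<Rightarrow> 'a \<Rightarrow> real" where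
 "Gf A m T c b d \<omega> = (if d = 0 then 0 else c + (\<Sum>i=1..m. A i (T + int d - int i) \<omega> *
      (if i < d then Gf A m T c b (d - i) \<omega> else b (i - d) \<omega>)))"
  by pat_completeness auto
termination by (relation "Wellfounded.measure (\<lambda>(A, m, T, c, b, d, \<omega>). d)") auto

declare Gf.simps[simp del]

lemma Gf_rep:
  assumes rec: "\<And>s. H s = c + (\<Sum>i=1..m. A i (s - int i) \<omega> * H (s - int i))"
  shows "d \<ge> 1 \<Longrightarrow> H (T + int d) = Gf A m T c (\<lambda>n _. H (T - int n)) d \<omega>"
proof (induction d rule: less_induct)
  case (less d)
  have "H (T + int d) = c + (\<Sum>i=1..m. A i (T + int d - int i) \<omega> * H (T + int d - int i))"
    by (rule rec)
  also have "\<dots> = c + (\<Sum>i=1..m. A i (T + int d - int i) \<omega> *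
      (if i < d then Gf A m T c (\<lambda>n _. H (T - int n)) (d - i) \<omega> else H (T - int (i - d))))"
  proof -
    have "\<And>i. i \<in> {1..m} \<Longrightarrow> H (T + int d - int i) = (if i < d then Gf A m T c (\<lambda>n _. H (T - int n)) (d - i) \<omega> else H (T - int (i - d)))"
    proof -
      fix i assume i: "i \<in> {1..m}"
      show "H (T + int d - int i) = (if i < d then Gf A m T c (\<lambda>n _. H (T - int n)) (d - i) \<omega> else H (T - int (i - d)))"
      proof (cases "i < d")
        case True
        then have "H (T + int (d - i)) = Gf A m T c (\<lambda>n _. H (T - int n)) (d - i) \<omega>"
          using i by (intro less.IH) auto
        moreover have "T + int (d - i) = T + int d - int i" using True by simp
        ultimately show ?thesis using True by (simp add: algebra_simps)
      next
        case False
        then have "T - int (i - d) = T + int d - int i" by simp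
        then show ?thesis using False by (simp add: algebra_simps)
      qed
    qed
    then show ?thesis by (intro arg_cong2[where f="(+)"] refl sum.cong) auto
  qed
  also have "\<dots> = Gf A m T c (\<lambda>n _. H (T - int n)) d \<omega>"
    using less.prems by (simp only: Gf.simps[of A m T c "\<lambda>n _. H (T - int n)" d \<omega>]) simp
  finally show ?case .
qed

lemma Gf_split: "Gf A m T c b d \<omega> = Gf A m T c (\<lambda>_ _. 0) d \<omega> + Gf A m T 0 b d \<omega>"
proof (induction d rule: less_induct)
  case (less d)
  show ?case
  proof (cases "d = 0")
    case True then show ?thesis by (simp add: Gf.simps)
  next
    case False
    have "Gf A m T c b d \<omega> = c + (\<Sum>i=1..m. A i (T + int d - int i) \<omega> *
      (if i < d then Gf A m T c b (d - i) \<omega> else b (i - d) \<omega>))"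
      using False by (subst Gf.simps) simp
    also have "\<dots> = c + (\<Sum>i=1..m. A i (T + int d - int i) \<omega> *
      (if i < d then Gf A m T c (\<lambda>_ _. 0) (d - i) \<omega> else 0)
      + A i (T + int d - int i) \<omega> * (if i < d then Gf A m T 0 b (d - i) \<omega> else b (i - d) \<omega>))"
      by (intro arg_cong2[where f="(+)"] refl sum.cong) (auto simp: less.IH[of "d - _"] algebra_simps)
    also have "\<dots> = Gf A m T c (\<lambda>_ _. 0) d \<omega> + Gf A m T 0 b d \<omega>"
      using False by (subst (1 2) Gf.simps) (simp add: sum.distrib)
    finally show ?thesis .
  qed
qed

lemma Gf_nonneg:
  assumes "c \<ge> 0" "\<And>n. b n \<omega> \<ge> 0" "\<And>i s. A i s \<omega> \<ge> 0"
  shows "Gf A m T c b d \<omega> \<ge> 0"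
proof (induction d rule: less_induct)
  case (less d)
  show ?case
    using assms less.IH
    by (subst Gf.simps) (auto intro!: add_nonneg_nonneg sum_nonneg mult_nonneg_nonneg)
qed

lemma Gf_bound:
  assumes "B \<ge> 0" "\<And>n. n < m \<Longrightarrow> b n \<omega> \<ge> 0" "\<And>n. n < m \<Longrightarrow> b n \<omega> \<le> B" "\<And>i s. A i s \<omega> \<ge> 0"
  shows "Gf A m T 0 b d \<omega> \<le> B * Gf A m T 0 (\<lambda>_ _. 1) d \<omega>"
proof (induction d rule: less_induct)
  case (less d)
  show ?case
  proof (cases "d = 0")
    case True then show ?thesis by (simp add: Gf.simps)
  next
    case False
    have "Gf A m T 0 b d \<omega> = (\<Sum>i=1..m. A i (T + int d - int i) \<omega> *
      (if i < d then Gf A m T 0 b (d - i) \<omega> else b (i - d) \<omega>))"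
      using False by (subst Gf.simps) simp
    also have "\<dots> \<le> (\<Sum>i=1..m. B * (A i (T + int d - int i) \<omega> *
      (if i < d then Gf A m T 0 (\<lambda>_ _. 1) (d - i) \<omega> else 1)))"
    proof (rule sum_mono)
      fix i assume i: "i \<in> {1..m}"
      have le: "(if i < d then Gf A m T 0 b (d - i) \<omega> else b (i - d) \<omega>)
          \<le> B * (if i < d then Gf A m T 0 (\<lambda>_ _. 1) (d - i) \<omega> else 1)"
        using less.IH[of "d - i"] assms(3)[of "i - d"] i False by auto
      then show "A i (T + int d - int i) \<omega> * (if i < d then Gf A m T 0 b (d - i) \<omega> else b (i - d) \<omega>)
          \<le> B * (A i (T + int d - int i) \<omega> * (if i < d then Gf A m T 0 (\<lambda>_ _. 1) (d - i) \<omega> else 1))"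
        using mult_left_mono[OF le assms(4)[of i "T + int d - int i"]] by (metis mult.left_commute)
    qed
    also have "\<dots> = B * Gf A m T 0 (\<lambda>_ _. 1) d \<omega>"
      using False by (subst (2) Gf.simps) (simp add: sum_distrib_left)
    finally show ?thesis .
  qed
qed

locale igarch = prob_space M for M :: "'a measure" +
  fixes p q w :: nat and mu k :: real and \<alpha> \<beta> \<gamma> :: "nat \<Rightarrow> real"
    and eps eta h :: "int \<Rightarrow> 'a \<Rightarrow> real"
  assumes p_pos: "p > 0"
    and mu_pos: "mu > 0" and k_pos: "k > 0"
    and \<alpha>_pos: "\<And>i. 1 \<le> i \<Longrightarrow> i \<le> p \<Longrightarrow> \<alpha> i > 0"
    and \<beta>_pos: "\<And>i. 1 \<le> i \<Longrightarrow> i \<le> q \<Longrightarrow> \<beta> i > 0"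
    and \<gamma>_pos: "\<And>i. 1 \<le> i \<Longrightarrow> i \<le> w \<Longrightarrow> \<gamma> i > 0"
    and eps_distr: "\<And>s. distributed M lborel (eps s) (\<lambda>x. ennreal (std_normal_density x))"
    and eta_distr: "\<And>s. distributed M lborel (eta s) (\<lambda>x. ennreal (gamma_density k x))"
    and indep_innov: "indep_vars (\<lambda>_. borel)
                        (\<lambda>j. case j of Inl s \<Rightarrow> eps s | Inr s \<Rightarrow> eta s) (UNIV :: (int + int) set)"
    and h_meas: "\<And>s. h s \<in> borel_measurable M"
    and h_nonneg: "\<And>s \<omega>. \<omega> \<in> space M \<Longrightarrow> h s \<omega> \<ge> 0"
    and indep_past: "\<And>s. indep_set
                        (sets (vimage_algebra (space M) (\<lambda>\<omega>. (eps s \<omega>, eta s \<omega>)) (borel \<Otimes>\<^sub>M borel)))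
                        (sets (vimage_algebra (space M) (\<lambda>\<omega>. restrict (\<lambda>u. h u \<omega>) {..s})
                                (PiM {..s} (\<lambda>_. borel))))"
    and recursion: "\<And>s \<omega>. \<omega> \<in> space M \<Longrightarrow>
          h s \<omega> = mu
            + (\<Sum>i=1..p. \<alpha> i * \<bar>h (s - int i) \<omega> * eps (s - int i) \<omega>\<bar>)
            + (\<Sum>i=1..q. \<beta> i * (h (s - int i) \<omega> * eta (s - int i) \<omega>))
            + (\<Sum>i=1..w. \<gamma> i * h (s - int i) \<omega>)"
    and stationary: "\<And>s. distr M borel (h s) = distr M borel (h 0)"
begin

definition "mm = max p (max q w)"
definition "A = igarch_x p q w \<alpha> \<beta> \<gamma> eps eta"
definition "ea = (\<integral>x. std_normal_density x * \<bar>x\<bar> \<partial>lborel)"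
definition "mui i = (if 1 \<le> i \<and> i \<le> p then \<alpha> i * ea else 0) + (if 1 \<le> i \<and> i \<le> q then \<beta> i * k else 0)
   + (if 1 \<le> i \<and> i \<le> w then \<gamma> i else 0)"
definition "gx x y i = (if 1 \<le> i \<and> i \<le> p then \<alpha> i * \<bar>x\<bar> else 0) + (if 1 \<le> i \<and> i \<le> q then \<beta> i * y else 0)
   + (if 1 \<le> i \<and> i \<le> w then \<gamma> i else (0::real))"

lemma A_eq: "A i s \<omega> = gx (eps s \<omega>) (eta s \<omega>) i"
  by (simp add: A_def igarch_x_def gx_def)

lemma gx_meas: "(\<lambda>z. gx (fst z) (snd z) i) \<in> borel_measurable (borel \<Otimes>\<^sub>M borel)"
  unfolding gx_def by measurable

lemma eps_meas[measurable]: "eps s \<in> borel_measurable M"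
  using eps_distr[of s] by (simp add: distributed_def)
lemma eta_meas[measurable]: "eta s \<in> borel_measurable M"
  using eta_distr[of s] by (simp add: distributed_def)

lemma A_meas[measurable]: "A i s \<in> borel_measurable M"
  unfolding A_eq[abs_def] gx_def by measurable

lemma ea_nonneg: "ea \<ge> 0"
  unfolding ea_def by (rule integral_nonneg_AE) (auto simp: normal_density_nonneg)

lemma mui_nonneg: "mui i \<ge> 0"
  unfolding mui_def using ea_nonneg k_pos \<alpha>_pos[of i] \<beta>_pos[of i] \<gamma>_pos[of i]
  by (auto intro!: add_nonneg_nonneg)

lemma A_int: "integrable M (A i s)" "integral\<^sup>L M (A i s) = mui i"
proof -
  note e = eps_moments[OF eps_distr[of s]] and n = eta_moments[OF k_pos eta_distr[of s]]
  have eq: "A i s = (\<lambda>\<omega>. (if 1 \<le> i \<and> i \<le> p then \<alpha> i else 0) * \<bar>eps s \<omega>\<bar> + (if 1 \<le> i \<and> i \<le> q then \<beta> i else 0) * eta s \<omega>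
       + (if 1 \<le> i \<and> i \<le> w then \<gamma> i else 0))"
    by (auto simp: A_eq gx_def fun_eq_iff)
  show "integrable M (A i s)" unfolding eq using e n by auto
  show "integral\<^sup>L M (A i s) = mui i" unfolding eq using e n
    by (simp add: mui_def ea_def prob_space)
qed

lemma AE_eta_nonneg: "AE \<omega> in M. \<forall>s. eta s \<omega> \<ge> 0"
  using eta_moments(3)[OF k_pos eta_distr] by (simp add: AE_all_countable)

lemma AE_A_nonneg: "AE \<omega> in M. \<forall>i s. A i s \<omega> \<ge> 0"
  using AE_eta_nonneg
proof eventually_elim
  case (elim \<omega>)
  then show ?case using \<alpha>_pos \<beta>_pos \<gamma>_pos
    by (auto simp: A_eq gx_def intro!: add_nonneg_nonneg mult_nonneg_nonneg less_imp_le[OF \<alpha>_pos] less_imp_le[OF \<beta>_pos] less_imp_le[OF \<gamma>_pos])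
qed

lemma mm_ge: "p \<le> mm" "q \<le> mm" "w \<le> mm" "1 \<le> mm"
  using p_pos by (auto simp: mm_def)

lemma rec2: "\<omega> \<in> space M \<Longrightarrow> h s \<omega> = mu + (\<Sum>i=1..mm. A i (s - int i) \<omega> * h (s - int i) \<omega>)"
proof -
  assume \<omega>: "\<omega> \<in> space M"
  have "(\<Sum>i=1..mm. A i (s - int i) \<omega> * h (s - int i) \<omega>)
    = (\<Sum>i=1..mm. if 1 \<le> i \<and> i \<le> p then \<alpha> i * \<bar>h (s - int i) \<omega> * eps (s - int i) \<omega>\<bar> else 0)
    + (\<Sum>i=1..mm. if 1 \<le> i \<and> i \<le> q then \<beta> i * (h (s - int i) \<omega> * eta (s - int i) \<omega>) else 0)
    + (\<Sum>i=1..mm. if 1 \<le> i \<and> i \<le> w then \<gamma> i * h (s - int i) \<omega> else 0)"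
    unfolding sum.distrib[symmetric]
    by (rule sum.cong) (auto simp: A_eq gx_def algebra_simps abs_mult h_nonneg[OF \<omega>])
  also have "\<dots> = (\<Sum>i=1..p. \<alpha> i * \<bar>h (s - int i) \<omega> * eps (s - int i) \<omega>\<bar>)
            + (\<Sum>i=1..q. \<beta> i * (h (s - int i) \<omega> * eta (s - int i) \<omega>))
            + (\<Sum>i=1..w. \<gamma> i * h (s - int i) \<omega>)"
    using sum_if_le[OF mm_ge(1)] sum_if_le[OF mm_ge(2)] sum_if_le[OF mm_ge(3)] by (simp only:)
  finally show ?thesis using recursion[OF \<omega>, of s] by simp
qed

end
context igarch
begin

definition "Z = (\<lambda>j. case j of Inl s \<Rightarrow> eps s | Inr s \<Rightarrow> eta s)"
definition "Lset v = Inl ` {..<v} \<union> Inr ` {..<(v::int)}"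
definition "Fpast v = vimage_algebra (space M) (\<lambda>\<omega>. restrict (\<lambda>j. Z j \<omega>) (Lset v)) (PiM (Lset v) (\<lambda>_. borel))"

lemma Z_meas: "Z j \<in> borel_measurable M"
  by (cases j) (auto simp: Z_def)

lemma restrict_Z_meas: "(\<lambda>\<omega>. restrict (\<lambda>j. Z j \<omega>) K) \<in> measurable M (PiM K (\<lambda>_. borel))"
  by (rule measurable_restrict) (rule Z_meas)

lemma sub_Fpast: "subalgebra M (Fpast v)"
  unfolding Fpast_def by (rule subalgebra_vimage[OF restrict_Z_meas])

lemma Fpast_space: "space (Fpast v) = space M"
  by (simp add: Fpast_def)

lemma Z_Fpast: "j \<in> Lset v \<Longrightarrow> Z j \<in> borel_measurable (Fpast v)"
proof -
  assume j: "j \<in> Lset v"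
  have "(\<lambda>f. f j) \<circ> (\<lambda>\<omega>. restrict (\<lambda>j. Z j \<omega>) (Lset v)) \<in> borel_measurable (Fpast v)"
    unfolding Fpast_def
    by (rule measurable_comp[OF measurable_vimage_algebra1 measurable_component_singleton[OF j]])
       (auto simp: space_PiM)
  moreover have "(\<lambda>f. f j) \<circ> (\<lambda>\<omega>. restrict (\<lambda>j. Z j \<omega>) (Lset v)) = Z j"
    using j by (auto simp: fun_eq_iff)
  ultimately show ?thesis by simp
qed

lemma eps_Fpast: "r < v \<Longrightarrow> eps r \<in> borel_measurable (Fpast v)"
  using Z_Fpast[of "Inl r" v] by (simp add: Z_def Lset_def)
lemma eta_Fpast: "r < v \<Longrightarrow> eta r \<in> borel_measurable (Fpast v)"
  using Z_Fpast[of "Inr r" v] by (simp add: Z_def Lset_def)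

lemma A_Fpast: "r < v \<Longrightarrow> A i r \<in> borel_measurable (Fpast v)"
proof -
  assume r: "r < v"
  have "(\<lambda>\<omega>. (eps r \<omega>, eta r \<omega>)) \<in> measurable (Fpast v) (borel \<Otimes>\<^sub>M borel)"
    by (rule measurable_Pair) (use eps_Fpast[OF r] eta_Fpast[OF r] in auto)
  from measurable_comp[OF this gx_meas[of i]] show ?thesis
    by (simp add: comp_def A_eq[abs_def])
qed

lemma indep_innov_past:
  assumes g: "g \<in> borel_measurable (borel \<Otimes>\<^sub>M borel)" and Y: "Y \<in> borel_measurable (Fpast v)"
  shows "indep_var borel (\<lambda>\<omega>. g (eps v \<omega>, eta v \<omega>)) borel (Y :: 'a \<Rightarrow> real)"
proof -
  define Kc where "Kc = {Inl v, Inr v :: int + int}"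
  define Rc where "Rc = (\<lambda>\<omega>. restrict (\<lambda>j. Z j \<omega>) Kc)"
  define Rp where "Rp = (\<lambda>\<omega>. restrict (\<lambda>j. Z j \<omega>) (Lset v))"
  have ind0: "indep_vars (\<lambda>_. borel) Z UNIV"
    using indep_innov unfolding Z_def .
  have i1: "indep_vars (\<lambda>j. PiM (case_bool Kc (Lset v) j) (\<lambda>_. borel))
          (\<lambda>j \<omega>. restrict (\<lambda>i. Z i \<omega>) (case_bool Kc (Lset v) j)) UNIV"
    by (rule indep_vars_restrict[OF ind0]) (auto simp: disjoint_family_on_def Lset_def Kc_def split: bool.split)
  have e1: "(\<lambda>j. PiM (case_bool Kc (Lset v) j) (\<lambda>_. borel)) = case_bool (PiM Kc (\<lambda>_. borel)) (PiM (Lset v) (\<lambda>_. borel))"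
    by (auto simp: fun_eq_iff split: bool.split)
  have e2: "(\<lambda>j \<omega>. restrict (\<lambda>i. Z i \<omega>) (case_bool Kc (Lset v) j)) = case_bool Rc Rp"
    by (auto simp: fun_eq_iff Rc_def Rp_def split: bool.split)
  have iv: "indep_var (PiM Kc (\<lambda>_. borel)) Rc (PiM (Lset v) (\<lambda>_. borel)) Rp"
    unfolding indep_var_def using i1 unfolding e1 e2 .
  have isv: "indep_set (sets (vimage_algebra (space M) Rc (PiM Kc (\<lambda>_. borel))))
                      (sets (vimage_algebra (space M) Rp (PiM (Lset v) (\<lambda>_. borel))))"
    using iv unfolding indep_var_eq by (simp add: sets_vimage_algebra)
  have Rcm: "Rc \<in> measurable M (PiM Kc (\<lambda>_. borel))" unfolding Rc_def by (rule restrict_Z_meas)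
  have Rpm: "Rp \<in> measurable M (PiM (Lset v) (\<lambda>_. borel))" unfolding Rp_def by (rule restrict_Z_meas)
  have X: "(\<lambda>\<omega>. g (eps v \<omega>, eta v \<omega>)) \<in> borel_measurable (vimage_algebra (space M) Rc (PiM Kc (\<lambda>_. borel)))"
  proof -
    have c: "(\<lambda>f. g (f (Inl v), f (Inr v))) \<in> borel_measurable (PiM Kc (\<lambda>_. borel))"
      by (rule measurable_compose[OF _ g], rule measurable_Pair)
         (auto simp: Kc_def intro!: measurable_component_singleton)
    have "(\<lambda>f. g (f (Inl v), f (Inr v))) \<circ> Rc \<in> borel_measurable (vimage_algebra (space M) Rc (PiM Kc (\<lambda>_. borel)))"
      by (rule measurable_comp[OF measurable_vimage_algebra1 c]) (auto simp: space_PiM Rc_def)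
    moreover have "(\<lambda>f. g (f (Inl v), f (Inr v))) \<circ> Rc = (\<lambda>\<omega>. g (eps v \<omega>, eta v \<omega>))"
      by (auto simp: fun_eq_iff Rc_def Kc_def Z_def)
    ultimately show ?thesis by simp
  qed
  show ?thesis
    by (rule indep_var_sub[OF isv subalgebra_vimage[OF Rcm] subalgebra_vimage[OF Rpm] X])
       (use Y in \<open>simp add: Fpast_def Rp_def\<close>)
qed

lemma indep_cur:
  assumes g: "g \<in> borel_measurable (borel \<Otimes>\<^sub>M borel)"
  shows "indep_var borel (\<lambda>\<omega>. g (eps s \<omega>, eta s \<omega>)) borel (h s)"
proof -
  define P where "P = (\<lambda>\<omega>. (eps s \<omega>, eta s \<omega>))"
  define R where "R = (\<lambda>\<omega>. restrict (\<lambda>u. h u \<omega>) {..s})"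
  have Pm: "P \<in> measurable M (borel \<Otimes>\<^sub>M borel)" unfolding P_def by measurable
  have Rm: "R \<in> measurable M (PiM {..s} (\<lambda>_. borel))" unfolding R_def
    by (rule measurable_restrict) (rule h_meas)
  have X: "(\<lambda>\<omega>. g (eps s \<omega>, eta s \<omega>)) \<in> borel_measurable (vimage_algebra (space M) P (borel \<Otimes>\<^sub>M borel))"
  proof -
    have "g \<circ> P \<in> borel_measurable (vimage_algebra (space M) P (borel \<Otimes>\<^sub>M borel))"
      by (rule measurable_comp[OF measurable_vimage_algebra1 g]) (auto simp: space_pair_measure)
    then show ?thesis by (simp add: comp_def P_def)
  qed
  have Y: "h s \<in> borel_measurable (vimage_algebra (space M) R (PiM {..s} (\<lambda>_. borel)))"
  proof -
    have "(\<lambda>f. f s) \<circ> R \<in> borel_measurable (vimage_algebra (space M) R (PiM {..s} (\<lambda>_. borel)))"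
      by (rule measurable_comp[OF measurable_vimage_algebra1 measurable_component_singleton])
         (auto simp: space_PiM R_def)
    moreover have "(\<lambda>f. f s) \<circ> R = h s" by (auto simp: fun_eq_iff R_def)
    ultimately show ?thesis by simp
  qed
  show ?thesis
    by (rule indep_var_sub[OF _ subalgebra_vimage[OF Pm] subalgebra_vimage[OF Rm] X Y])
       (use indep_past[of s] in \<open>simp add: P_def R_def\<close>)
qed

lemma indep_A_h: "indep_var borel (A i s) borel (h s)"
  using indep_cur[OF gx_meas[of i], of s] by (simp add: A_eq[abs_def])

end
context igarch
begin

definition "S = (\<Sum>i=1..mm. mui i)"

lemma S_nonneg: "S \<ge> 0" unfolding S_def by (rule sum_nonneg) (rule mui_nonneg)

lemma h_distr_int: "integrable M (h s) \<longleftrightarrow> integrable M (h 0)"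
proof -
  have "integrable M (h s) \<longleftrightarrow> integrable (distr M borel (h s)) (\<lambda>x. x)"
    by (subst integrable_distr_eq) (auto simp: h_meas)
  also have "\<dots> \<longleftrightarrow> integrable (distr M borel (h 0)) (\<lambda>x. x)" by (simp add: stationary[of s])
  also have "\<dots> \<longleftrightarrow> integrable M (h 0)"
    by (subst integrable_distr_eq) (auto simp: h_meas)
  finally show ?thesis .
qed

lemma h_distr_E: "integral\<^sup>L M (h s) = integral\<^sup>L M (h 0)"
proof -
  have "integral\<^sup>L M (h s) = integral\<^sup>L (distr M borel (h s)) (\<lambda>x. x)"
    by (subst integral_distr) (auto simp: h_meas)
  also have "\<dots> = integral\<^sup>L (distr M borel (h 0)) (\<lambda>x. x)" by (simp add: stationary[of s])
  also have "\<dots> = integral\<^sup>L M (h 0)"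
    by (subst integral_distr) (auto simp: h_meas)
  finally show ?thesis .
qed

lemma part1:
  assumes hi: "integrable M (h t)"
  shows "S < 1 \<and> integral\<^sup>L M (h t) = mu / (1 - S)"
proof -
  define E where "E = integral\<^sup>L M (h t)"
  have hi': "\<And>s. integrable M (h s)" using hi h_distr_int by blast
  have hE: "\<And>s. integral\<^sup>L M (h s) = E" unfolding E_def using h_distr_E by metis
  have pint: "\<And>i s. integrable M (\<lambda>\<omega>. A i s \<omega> * h s \<omega>)"
    by (rule indep_var_integrable[OF indep_A_h A_int(1) hi'])
  have pE: "\<And>i s. integral\<^sup>L M (\<lambda>\<omega>. A i s \<omega> * h s \<omega>) = mui i * E"
    using indep_var_lebesgue_integral[OF indep_A_h A_int(1) hi'] A_int(2) hE by simp
  have "E = integral\<^sup>L M (\<lambda>\<omega>. mu + (\<Sum>i=1..mm. A i (t - int i) \<omega> * h (t - int i) \<omega>))"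
    unfolding E_def by (rule Bochner_Integration.integral_cong) (simp_all only: rec2[symmetric])
  also have "\<dots> = mu + (\<Sum>i=1..mm. mui i * E)"
    using pint by (simp add: integral_add integral_sum pE prob_space)
  also have "\<dots> = mu + S * E" by (simp add: S_def sum_distrib_right)
  finally have eq: "E = mu + S * E" .
  have E0: "E \<ge> 0" unfolding E_def by (rule integral_nonneg_AE) (auto intro: h_nonneg)
  have S1: "S < 1"
  proof (rule ccontr)
    assume "\<not> S < 1"
    then have "S * E \<ge> E" using E0 by (simp add: mult_le_cancel_right1 not_less)
    then show False using eq mu_pos by linarith
  qed
  moreover have "E = mu / (1 - S)" using eq S1 by (simp add: field_simps)
  ultimately show ?thesis unfolding E_def by simp
qed

lemma part_interval:
  assumes hi: "integrable M (h t)"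
  shows "integrable M (\<lambda>\<omega>. h t \<omega> * eps t \<omega>)"
    "integrable M (\<lambda>\<omega>. h t \<omega> * eta t \<omega>)"
    "interval_expectation M (\<lambda>\<omega>. h t \<omega> * eps t \<omega>) (\<lambda>\<omega>. h t \<omega> * eta t \<omega>)
             = (- k * integral\<^sup>L M (h t), k * integral\<^sup>L M (h t))"
proof -
  have i1: "indep_var borel (eps t) borel (h t)"
    using indep_cur[of fst t] by simp
  have i2: "indep_var borel (eta t) borel (h t)"
    using indep_cur[of snd t] by simp
  note e = eps_moments[OF eps_distr[of t]] and n = eta_moments[OF k_pos eta_distr[of t]]
  have c1: "(\<lambda>\<omega>. h t \<omega> * eps t \<omega>) = (\<lambda>\<omega>. eps t \<omega> * h t \<omega>)" by (simp add: mult.commute)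
  have c2: "(\<lambda>\<omega>. h t \<omega> * eta t \<omega>) = (\<lambda>\<omega>. eta t \<omega> * h t \<omega>)" by (simp add: mult.commute)
  show "integrable M (\<lambda>\<omega>. h t \<omega> * eps t \<omega>)"
    unfolding c1 by (rule indep_var_integrable[OF i1 e(1) hi])
  show "integrable M (\<lambda>\<omega>. h t \<omega> * eta t \<omega>)"
    unfolding c2 by (rule indep_var_integrable[OF i2 n(1) hi])
  have E1: "integral\<^sup>L M (\<lambda>\<omega>. h t \<omega> * eps t \<omega>) = 0"
    unfolding c1 using indep_var_lebesgue_integral[OF i1 e(1) hi] e(2) by simp
  have E2: "integral\<^sup>L M (\<lambda>\<omega>. h t \<omega> * eta t \<omega>) = k * integral\<^sup>L M (h t)"
    unfolding c2 using indep_var_lebesgue_integral[OF i2 n(1) hi] n(2) by simp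
  show "interval_expectation M (\<lambda>\<omega>. h t \<omega> * eps t \<omega>) (\<lambda>\<omega>. h t \<omega> * eta t \<omega>)
             = (- k * integral\<^sup>L M (h t), k * integral\<^sup>L M (h t))"
    by (simp add: interval_expectation_def E1 E2)
qed

end
context igarch
begin

lemma Gf_eq_fun: "Gf A mm T c (\<lambda>_ _. b0) d = (\<lambda>\<omega>. if d = 0 then 0 else c + (\<Sum>i=1..mm. A i (T + int d - int i) \<omega> *
      (if i < d then Gf A mm T c (\<lambda>_ _. b0) (d - i) \<omega> else b0)))"
  by (rule ext) (simp only: Gf.simps[of A mm T c "\<lambda>_ _. b0" d])

lemma Gf_Fpast: "T + int d \<le> v \<Longrightarrow> Gf A mm T c (\<lambda>_ _. b0) d \<in> borel_measurable (Fpast v)"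
proof (induction d arbitrary: v rule: less_induct)
  case (less d)
  show ?case
  proof (cases "d = 0")
    case True then show ?thesis by (subst Gf_eq_fun) simp
  next
    case False
    have "(\<lambda>\<omega>. c + (\<Sum>i=1..mm. A i (T + int d - int i) \<omega> *
      (if i < d then Gf A mm T c (\<lambda>_ _. b0) (d - i) \<omega> else b0))) \<in> borel_measurable (Fpast v)"
    proof (intro borel_measurable_add borel_measurable_const borel_measurable_sum)
      fix i assume i: "i \<in> {1..mm}"
      have Am: "A i (T + int d - int i) \<in> borel_measurable (Fpast v)"
        by (rule A_Fpast) (use i less.prems in auto)
      show "(\<lambda>\<omega>. A i (T + int d - int i) \<omega> * (if i < d then Gf A mm T c (\<lambda>_ _. b0) (d - i) \<omega> else b0))
          \<in> borel_measurable (Fpast v)"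
      proof (cases "i < d")
        case True
        have "Gf A mm T c (\<lambda>_ _. b0) (d - i) \<in> borel_measurable (Fpast v)"
          by (rule less.IH) (use True i less.prems in auto)
        then show ?thesis using True Am by simp
      next
        case False
        then show ?thesis using Am by simp
      qed
    qed
    then show ?thesis using False by (subst Gf_eq_fun) simp
  qed
qed

lemma indep_A_past: "Y \<in> borel_measurable (Fpast v) \<Longrightarrow> indep_var borel (A i v) borel Y"
  using indep_innov_past[OF gx_meas[of i]] by (simp add: A_eq[abs_def])

lemma Gf_meas: "Gf A mm T c (\<lambda>_ _. b0) d \<in> borel_measurable M"
  by (rule measurable_from_subalg[OF sub_Fpast Gf_Fpast[of T d "T + int d"]]) simp

lemma term_int:
  assumes i: "i \<ge> 1" and IH: "i < d \<Longrightarrow> integrable M (Gf A mm T c (\<lambda>_ _. b0) (d - i))"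
  shows "integrable M (\<lambda>\<omega>. A i (T + int d - int i) \<omega> * (if i < d then Gf A mm T c (\<lambda>_ _. b0) (d - i) \<omega> else b0))"
    "integral\<^sup>L M (\<lambda>\<omega>. A i (T + int d - int i) \<omega> * (if i < d then Gf A mm T c (\<lambda>_ _. b0) (d - i) \<omega> else b0))
      = mui i * (if i < d then integral\<^sup>L M (Gf A mm T c (\<lambda>_ _. b0) (d - i)) else b0)"
proof -
  have "integrable M (\<lambda>\<omega>. A i (T + int d - int i) \<omega> * (if i < d then Gf A mm T c (\<lambda>_ _. b0) (d - i) \<omega> else b0)) \<and>
    integral\<^sup>L M (\<lambda>\<omega>. A i (T + int d - int i) \<omega> * (if i < d then Gf A mm T c (\<lambda>_ _. b0) (d - i) \<omega> else b0))
      = mui i * (if i < d then integral\<^sup>L M (Gf A mm T c (\<lambda>_ _. b0) (d - i)) else b0)"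
  proof (cases "i < d")
    case True
    have Ym: "Gf A mm T c (\<lambda>_ _. b0) (d - i) \<in> borel_measurable (Fpast (T + int d - int i))"
      by (rule Gf_Fpast) (use True in auto)
    note iv = indep_A_past[OF Ym, of i]
    show ?thesis using True indep_var_integrable[OF iv A_int(1) IH[OF True]]
        indep_var_lebesgue_integral[OF iv A_int(1) IH[OF True]] A_int(2) by simp
  next
    case False
    then show ?thesis using A_int[of i "T + int d - int i"] by simp
  qed
  then show "integrable M (\<lambda>\<omega>. A i (T + int d - int i) \<omega> * (if i < d then Gf A mm T c (\<lambda>_ _. b0) (d - i) \<omega> else b0))"
    "integral\<^sup>L M (\<lambda>\<omega>. A i (T + int d - int i) \<omega> * (if i < d then Gf A mm T c (\<lambda>_ _. b0) (d - i) \<omega> else b0))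
      = mui i * (if i < d then integral\<^sup>L M (Gf A mm T c (\<lambda>_ _. b0) (d - i)) else b0)" by auto
qed

lemma Gf_int: "integrable M (Gf A mm T c (\<lambda>_ _. b0) d)"
proof (induction d rule: less_induct)
  case (less d)
  show ?case
  proof (cases "d = 0")
    case True then show ?thesis by (subst Gf_eq_fun) simp
  next
    case False
    have "integrable M (\<lambda>\<omega>. c + (\<Sum>i=1..mm. A i (T + int d - int i) \<omega> *
      (if i < d then Gf A mm T c (\<lambda>_ _. b0) (d - i) \<omega> else b0)))"
      by (intro Bochner_Integration.integrable_add integrable_const Bochner_Integration.integrable_sum term_int(1))
         (use False in \<open>auto intro: less.IH\<close>)
    then show ?thesis using False by (subst Gf_eq_fun) simp
  qed
qed

lemma Gf_E: "d \<ge> 1 \<Longrightarrow> integral\<^sup>L M (Gf A mm T c (\<lambda>_ _. b0) d) =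
   c + (\<Sum>i=1..mm. mui i * (if i < d then integral\<^sup>L M (Gf A mm T c (\<lambda>_ _. b0) (d - i)) else b0))"
proof -
  assume d: "d \<ge> 1"
  have ti: "\<And>i. i \<in> {1..mm} \<Longrightarrow> integrable M (\<lambda>\<omega>. A i (T + int d - int i) \<omega> * (if i < d then Gf A mm T c (\<lambda>_ _. b0) (d - i) \<omega> else b0))"
    by (rule term_int(1)) (auto intro: Gf_int)
  have "integral\<^sup>L M (Gf A mm T c (\<lambda>_ _. b0) d) = integral\<^sup>L M (\<lambda>\<omega>. c + (\<Sum>i=1..mm. A i (T + int d - int i) \<omega> *
      (if i < d then Gf A mm T c (\<lambda>_ _. b0) (d - i) \<omega> else b0)))"
    using d by (subst Gf_eq_fun) simp
  also have "\<dots> = c + (\<Sum>i=1..mm. integral\<^sup>L M (\<lambda>\<omega>. A i (T + int d - int i) \<omega> *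
      (if i < d then Gf A mm T c (\<lambda>_ _. b0) (d - i) \<omega> else b0)))"
  proof -
    have si: "integrable M (\<lambda>\<omega>. \<Sum>i=1..mm. A i (T + int d - int i) \<omega> *
      (if i < d then Gf A mm T c (\<lambda>_ _. b0) (d - i) \<omega> else b0))"
      by (rule Bochner_Integration.integrable_sum) (rule ti)
    have "integral\<^sup>L M (\<lambda>\<omega>. c + (\<Sum>i=1..mm. A i (T + int d - int i) \<omega> *
      (if i < d then Gf A mm T c (\<lambda>_ _. b0) (d - i) \<omega> else b0))) = integral\<^sup>L M (\<lambda>\<omega>. c) + integral\<^sup>L M (\<lambda>\<omega>. \<Sum>i=1..mm. A i (T + int d - int i) \<omega> *
      (if i < d then Gf A mm T c (\<lambda>_ _. b0) (d - i) \<omega> else b0))"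
      by (rule Bochner_Integration.integral_add[OF integrable_const si])
    also have "integral\<^sup>L M (\<lambda>\<omega>. \<Sum>i=1..mm. A i (T + int d - int i) \<omega> *
      (if i < d then Gf A mm T c (\<lambda>_ _. b0) (d - i) \<omega> else b0)) = (\<Sum>i=1..mm. integral\<^sup>L M (\<lambda>\<omega>. A i (T + int d - int i) \<omega> *
      (if i < d then Gf A mm T c (\<lambda>_ _. b0) (d - i) \<omega> else b0)))"
      by (rule Bochner_Integration.integral_sum) (rule ti)
    finally show ?thesis by (simp add: prob_space)
  qed
  also have "\<dots> = c + (\<Sum>i=1..mm. mui i * (if i < d then integral\<^sup>L M (Gf A mm T c (\<lambda>_ _. b0) (d - i)) else b0))"
    by (intro arg_cong2[where f="(+)"] refl sum.cong term_int(2)) (auto intro: Gf_int)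
  finally show ?thesis .
qed

lemma U_bound:
  assumes S1: "S < 1"
  shows "integral\<^sup>L M (Gf A mm T mu (\<lambda>_ _. 0) d) \<le> mu / (1 - S)"
proof (induction d rule: less_induct)
  case (less d)
  define K where "K = mu / (1 - S)"
  have K0: "K \<ge> 0" unfolding K_def using S1 mu_pos by simp
  show ?case
  proof (cases "d = 0")
    case True then show ?thesis using K0 by (subst Gf_eq_fun) (simp add: K_def)
  next
    case False
    have "integral\<^sup>L M (Gf A mm T mu (\<lambda>_ _. 0) d) =
      mu + (\<Sum>i=1..mm. mui i * (if i < d then integral\<^sup>L M (Gf A mm T mu (\<lambda>_ _. 0) (d - i)) else 0))"
      using False by (intro Gf_E) simp
    also have "\<dots> \<le> mu + (\<Sum>i=1..mm. mui i * K)"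
    proof (intro add_left_mono sum_mono mult_left_mono mui_nonneg)
      fix i assume i: "i \<in> {1..mm}"
      show "(if i < d then integral\<^sup>L M (Gf A mm T mu (\<lambda>_ _. 0) (d - i)) else 0) \<le> K"
        using less.IH[of "d - i"] i K0 by (auto simp: K_def)
    qed
    also have "\<dots> = mu + S * K" by (simp add: S_def sum_distrib_right)
    also have "\<dots> = K" using S1 by (simp add: K_def field_simps)
    finally show ?thesis by (simp add: K_def)
  qed
qed

lemma W_bound:
  assumes r0: "0 < r" and r1: "r \<le> 1" and Sr: "S \<le> r ^ mm"
  shows "d \<ge> 1 \<Longrightarrow> integral\<^sup>L M (Gf A mm T 0 (\<lambda>_ _. 1) d) \<le> r ^ d"
proof (induction d rule: less_induct)
  case (less d)
  define x where "x = (\<lambda>i. if i < d then integral\<^sup>L M (Gf A mm T 0 (\<lambda>_ _. 1) (d - i)) else 1)"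
  have E: "integral\<^sup>L M (Gf A mm T 0 (\<lambda>_ _. 1) d) = (\<Sum>i=1..mm. mui i * x i)"
    using Gf_E[OF less.prems, of T 0 1] by (simp add: x_def)
  have xb: "x i * r ^ mm \<le> r ^ d" if i: "i \<in> {1..mm}" for i
  proof (cases "i < d")
    case True
    have "x i \<le> r ^ (d - i)" using less.IH[of "d - i"] True i by (auto simp: x_def)
    then have "x i * r ^ mm \<le> r ^ (d - i) * r ^ mm" using r0 by (simp add: mult_right_mono)
    also have "\<dots> = r ^ (d - i + mm)" by (simp add: power_add)
    also have "\<dots> \<le> r ^ d" using r0 r1 i by (intro power_decreasing) auto
    finally show ?thesis .
  next
    case False
    then have "r ^ mm \<le> r ^ d" using r0 r1 i by (intro power_decreasing) auto
    then show ?thesis using False by (simp add: x_def)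
  qed
  have "(\<Sum>i=1..mm. mui i * x i) * r ^ mm = (\<Sum>i=1..mm. mui i * (x i * r ^ mm))"
    by (simp add: sum_distrib_right mult.assoc)
  also have "\<dots> \<le> (\<Sum>i=1..mm. mui i * r ^ d)"
    by (intro sum_mono mult_left_mono mui_nonneg xb)
  also have "\<dots> = S * r ^ d" by (simp add: S_def sum_distrib_right)
  also have "\<dots> \<le> r ^ mm * r ^ d" using Sr r0 by (simp add: mult_right_mono)
  finally have "(\<Sum>i=1..mm. mui i * x i) * r ^ mm \<le> r ^ d * r ^ mm" by (simp add: mult.commute)
  then have "(\<Sum>i=1..mm. mui i * x i) \<le> r ^ d" using r0 by simp
  then show ?case using E by simp
qed

end
context igarch
begin

lemma pr_stat: "measure M {\<omega>\<in>space M. h s \<omega> > L} = measure M {\<omega>\<in>space M. h 0 \<omega> > L}"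
proof -
  have "\<And>s. measure M {\<omega>\<in>space M. h s \<omega> > L} = measure (distr M borel (h s)) {L<..}"
    by (subst measure_distr) (auto simp: h_meas intro!: arg_cong[where f="measure M"])
  then show ?thesis using stationary[of s] by metis
qed

lemma pr_small: "\<eta> > 0 \<Longrightarrow> \<exists>L>0. measure M {\<omega>\<in>space M. h 0 \<omega> > L} \<le> \<eta>"
proof -
  assume \<eta>: "\<eta> > 0"
  define B where "B = (\<lambda>n::nat. {\<omega>\<in>space M. h 0 \<omega> > real n})"
  have "(\<lambda>n. measure M (B n)) \<longlonglongrightarrow> measure M (\<Inter>n. B n)"
  proof (rule finite_Lim_measure_decseq)
    show "range B \<subseteq> sets M" unfolding B_def using h_meas[of 0] by auto
    show "decseq B" unfolding B_def decseq_def by auto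
  qed
  moreover have "(\<Inter>n. B n) = {}"
  proof safe
    fix \<omega> assume "\<omega> \<in> (\<Inter>n. B n)"
    moreover obtain n :: nat where "h 0 \<omega> < real n" using reals_Archimedean2 by blast
    ultimately show "\<omega> \<in> {}" unfolding B_def by (auto dest!: spec[of _ n])
  qed
  ultimately have "(\<lambda>n. measure M (B n)) \<longlonglongrightarrow> 0" by simp
  then have "eventually (\<lambda>n. measure M (B n) < \<eta>) sequentially"
    using \<eta> by (rule order_tendstoD(2))
  then obtain N where N: "\<And>n. n \<ge> N \<Longrightarrow> measure M (B n) < \<eta>"
    by (auto simp: eventually_sequentially)
  show ?thesis
    by (rule exI[of _ "real (Suc N)"]) (use N[of "Suc N"] in \<open>auto simp: B_def\<close>)
qed

lemma key_ineq:
  assumes S1: "S < 1" and c: "c > 0" and \<epsilon>: "\<epsilon> > 0" and L: "L > 0" and d: "d \<ge> 1"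
    and r0: "0 < r" and r1: "r \<le> 1" and Sr: "S \<le> r ^ mm"
  shows "integral\<^sup>L M (\<lambda>\<omega>. min (h t \<omega>) c) \<le> mu / (1 - S) + \<epsilon>
           + c * (real mm * measure M {\<omega>\<in>space M. h 0 \<omega> > L} + r ^ d * (real mm * L) / \<epsilon>)"
proof -
  define T where "T = t - int d"
  define U where "U = Gf A mm T mu (\<lambda>_ _. 0) d"
  define W where "W = Gf A mm T 0 (\<lambda>_ _. 1) d"
  define Hs where "Hs = (\<lambda>\<omega>. \<Sum>n<mm. h (T - int n) \<omega>)"
  define E where "E = {\<omega>\<in>space M. Hs \<omega> * W \<omega> > \<epsilon>}"
  define E1 where "E1 = {\<omega>\<in>space M. Hs \<omega> > real mm * L}"
  define E2 where "E2 = {\<omega>\<in>space M. W \<omega> \<ge> \<epsilon> / (real mm * L)}"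
  have mm0: "real mm > 0" using mm_ge by simp
  have Um[measurable]: "U \<in> borel_measurable M" unfolding U_def by (rule Gf_meas)
  have Wm[measurable]: "W \<in> borel_measurable M" unfolding W_def by (rule Gf_meas)
  have Hm[measurable]: "Hs \<in> borel_measurable M" unfolding Hs_def using h_meas by measurable
  have Es: "E \<in> sets M" unfolding E_def by measurable
  have E1s: "E1 \<in> sets M" unfolding E1_def by measurable
  have E2s: "E2 \<in> sets M" unfolding E2_def by measurable
  have hs: "\<And>s. {\<omega>\<in>space M. h s \<omega> > L} \<in> sets M"
  proof -
    fix s
    have "{\<omega>\<in>space M. h s \<omega> > L} = h s -` {L<..} \<inter> space M" by auto
    then show "{\<omega>\<in>space M. h s \<omega> > L} \<in> sets M" using measurable_sets[OF h_meas[of s], of "{L<..}"] by simp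
  qed
  have tT: "T + int d = t" unfolding T_def by simp
  have AEb: "AE \<omega> in M. min (h t \<omega>) c \<le> U \<omega> + \<epsilon> + c * indicator E \<omega>"
    using AE_A_nonneg AE_space
  proof eventually_elim
    case (elim \<omega>)
    then have An: "\<And>i s. 0 \<le> A i s \<omega>" and \<omega>: "\<omega> \<in> space M" by auto
    have "h (T + int d) \<omega> = Gf A mm T mu (\<lambda>n _. h (T - int n) \<omega>) d \<omega>"
      by (rule Gf_rep[where H="\<lambda>s. h s \<omega>"]) (rule rec2[OF \<omega>], rule d)
    also have "\<dots> = U \<omega> + Gf A mm T 0 (\<lambda>n _. h (T - int n) \<omega>) d \<omega>"
      unfolding U_def by (rule Gf_split)
    finally have hsplit: "h t \<omega> = U \<omega> + Gf A mm T 0 (\<lambda>n _. h (T - int n) \<omega>) d \<omega>" using tT by simp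
    have U0: "U \<omega> \<ge> 0" unfolding U_def by (rule Gf_nonneg) (use An mu_pos in auto)
    have Hs0: "Hs \<omega> \<ge> 0" unfolding Hs_def by (rule sum_nonneg) (use h_nonneg \<omega> in auto)
    have Vb: "Gf A mm T 0 (\<lambda>n _. h (T - int n) \<omega>) d \<omega> \<le> Hs \<omega> * W \<omega>"
      unfolding W_def
    proof (rule Gf_bound[OF Hs0])
      fix n assume n: "n < mm"
      show "0 \<le> h (T - int n) \<omega>" using h_nonneg \<omega> by auto
      show "h (T - int n) \<omega> \<le> Hs \<omega>" unfolding Hs_def
        by (rule member_le_sum) (use n h_nonneg \<omega> in auto)
    qed (rule An)
    have h0: "h t \<omega> \<ge> 0" using h_nonneg \<omega> by auto
    show ?case
    proof (cases "\<omega> \<in> E")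
      case True
      then show ?thesis using U0 \<epsilon> c by simp
    next
      case False
      then have "Hs \<omega> * W \<omega> \<le> \<epsilon>" using \<omega> by (auto simp: E_def)
      then have "h t \<omega> \<le> U \<omega> + \<epsilon>" using hsplit Vb by simp
      then show ?thesis using False by simp
    qed
  qed
  have iE: "integrable M (indicator E :: 'a \<Rightarrow> real)"
    using Es by (intro integrable_real_indicator) (auto simp: emeasure_eq_measure)
  have iU: "integrable M U" unfolding U_def by (rule Gf_int)
  have "integral\<^sup>L M (\<lambda>\<omega>. min (h t \<omega>) c) \<le> integral\<^sup>L M (\<lambda>\<omega>. U \<omega> + \<epsilon> + c * indicator E \<omega>)"
  proof (rule integral_mono_AE[OF _ _ AEb])
    show "integrable M (\<lambda>\<omega>. min (h t \<omega>) c)"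
      by (rule integrable_const_bound[where B=c]) (use h_nonneg c h_meas in auto)
    show "integrable M (\<lambda>\<omega>. U \<omega> + \<epsilon> + c * indicator E \<omega>)"
      using iU iE by auto
  qed
  also have "\<dots> = integral\<^sup>L M U + \<epsilon> + c * measure M E"
    using iU iE Es by (simp add: prob_space)
  also have "\<dots> \<le> mu / (1 - S) + \<epsilon> + c * (real mm * measure M {\<omega>\<in>space M. h 0 \<omega> > L} + r ^ d * (real mm * L) / \<epsilon>)"
  proof -
    have UB: "integral\<^sup>L M U \<le> mu / (1 - S)" unfolding U_def by (rule U_bound[OF S1])
    have "measure M E \<le> measure M (E1 \<union> E2)"
    proof (rule finite_measure_mono)
      show "E \<subseteq> E1 \<union> E2"
      proof
        fix \<omega> assume \<omega>E: "\<omega> \<in> E"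
        show "\<omega> \<in> E1 \<union> E2"
        proof (rule ccontr)
          assume "\<omega> \<notin> E1 \<union> E2"
          then have a: "Hs \<omega> \<le> real mm * L" and b: "W \<omega> < \<epsilon> / (real mm * L)" using \<omega>E
            by (auto simp: E_def E1_def E2_def)
          have Hs0: "Hs \<omega> \<ge> 0" unfolding Hs_def by (rule sum_nonneg) (use h_nonneg \<omega>E in \<open>auto simp: E_def\<close>)
          have "Hs \<omega> * W \<omega> < \<epsilon>"
          proof (cases "W \<omega> \<le> 0")
            case True
            have "Hs \<omega> * W \<omega> \<le> 0" using Hs0 True by (rule mult_nonneg_nonpos)
            then show ?thesis using \<epsilon> by linarith
          next
            case False
            then have "Hs \<omega> * W \<omega> \<le> real mm * L * W \<omega>" using a by (simp add: mult_right_mono)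
            also have "\<dots> < real mm * L * (\<epsilon> / (real mm * L))" using b mm0 L by (intro mult_strict_left_mono) auto
            also have "\<dots> = \<epsilon>" using mm0 L by simp
            finally show ?thesis .
          qed
          then show False using \<omega>E by (auto simp: E_def)
        qed
      qed
    qed (use E1s E2s in auto)
    also have "\<dots> \<le> measure M E1 + measure M E2" by (rule measure_Un_le[OF E1s E2s])
    finally have mE: "measure M E \<le> measure M E1 + measure M E2" .
    have "measure M E1 \<le> measure M (\<Union>n\<in>{..<mm}. {\<omega>\<in>space M. h (T - int n) \<omega> > L})"
    proof (rule finite_measure_mono)
      show "E1 \<subseteq> (\<Union>n\<in>{..<mm}. {\<omega>\<in>space M. h (T - int n) \<omega> > L})"
      proof
        fix \<omega> assume \<omega>: "\<omega> \<in> E1"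
        show "\<omega> \<in> (\<Union>n\<in>{..<mm}. {\<omega>\<in>space M. h (T - int n) \<omega> > L})"
        proof (rule ccontr)
          assume "\<omega> \<notin> (\<Union>n\<in>{..<mm}. {\<omega>\<in>space M. h (T - int n) \<omega> > L})"
          then have "\<And>n. n < mm \<Longrightarrow> h (T - int n) \<omega> \<le> L" using \<omega> by (auto simp: E1_def not_less)
          then have "Hs \<omega> \<le> (\<Sum>n<mm. L)" unfolding Hs_def by (intro sum_mono) auto
          then show False using \<omega> by (auto simp: E1_def)
        qed
      qed
      show "(\<Union>n\<in>{..<mm}. {\<omega>\<in>space M. h (T - int n) \<omega> > L}) \<in> sets M"
        using hs by blast
    qed
    also have "\<dots> \<le> (\<Sum>n<mm. measure M {\<omega>\<in>space M. h (T - int n) \<omega> > L})"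
      by (rule finite_measure_subadditive_finite) (use hs in auto)
    also have "\<dots> = (\<Sum>n<mm. measure M {\<omega>\<in>space M. h 0 \<omega> > L})"
      by (rule sum.cong) (rule refl, rule pr_stat)
    also have "\<dots> = real mm * measure M {\<omega>\<in>space M. h 0 \<omega> > L}"
      by simp
    finally have mE1: "measure M E1 \<le> real mm * measure M {\<omega>\<in>space M. h 0 \<omega> > L}" .
    have "measure M E2 \<le> integral\<^sup>L M W / (\<epsilon> / (real mm * L))"
      unfolding E2_def
    proof (rule integral_Markov_inequality_measure[where A="space M"])
      show "integrable M W" unfolding W_def by (rule Gf_int)
      show "AE x in M. 0 \<le> W x" using AE_A_nonneg
        by eventually_elim (auto simp: W_def intro!: Gf_nonneg)
    qed (use \<epsilon> L mm0 in auto)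
    also have "\<dots> \<le> r ^ d / (\<epsilon> / (real mm * L))"
      using W_bound[OF r0 r1 Sr d, of T] \<epsilon> L mm0 unfolding W_def by (intro divide_right_mono) auto
    also have "\<dots> = r ^ d * (real mm * L) / \<epsilon>" by simp
    finally have mE2: "measure M E2 \<le> r ^ d * (real mm * L) / \<epsilon>" .
    have "c * measure M E \<le> c * (real mm * measure M {\<omega>\<in>space M. h 0 \<omega> > L} + r ^ d * (real mm * L) / \<epsilon>)"
      using mE mE1 mE2 c by (intro mult_left_mono) auto
    then show ?thesis using UB by linarith
  qed
  finally show ?thesis .
qed

end
context igarch
begin

lemma min_bound:
  assumes S1: "S < 1" and c: "c > 0"
  shows "integral\<^sup>L M (\<lambda>\<omega>. min (h t \<omega>) c) \<le> mu / (1 - S)"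
proof (rule field_le_epsilon)
  fix e :: real assume e: "e > 0"
  define \<delta> where "\<delta> = e / 3"
  have \<delta>: "\<delta> > 0" using e by (simp add: \<delta>_def)
  define r where "r = max (1/2) (root mm S)"
  have mm0: "mm > 0" and mmr: "real mm > 0" using mm_ge by auto
  have r0: "0 < r" and r1: "r < 1" using S1 mm0 by (auto simp: r_def)
  have "S = root mm S ^ mm" using mm0 S_nonneg by simp
  also have "\<dots> \<le> r ^ mm" by (rule power_mono) (use S_nonneg in \<open>auto simp: r_def intro: real_root_ge_zero\<close>)
  finally have Sr: "S \<le> r ^ mm" .
  obtain L where L: "L > 0" and pL: "measure M {\<omega>\<in>space M. h 0 \<omega> > L} \<le> \<delta> / (c * real mm)"
    using pr_small[of "\<delta> / (c * real mm)"] \<delta> c mmr by auto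
  obtain n where n: "r ^ n < \<delta> * \<delta> / (c * real mm * L)"
    using real_arch_pow_inv[of "\<delta> * \<delta> / (c * real mm * L)" r] \<delta> c mmr L r1 by auto
  define d where "d = Suc n"
  have rd: "r ^ d \<le> \<delta> * \<delta> / (c * real mm * L)"
  proof -
    have "r ^ d \<le> r ^ n" unfolding d_def using r0 r1 by (intro power_decreasing) auto
    then show ?thesis using n by simp
  qed
  have key: "integral\<^sup>L M (\<lambda>\<omega>. min (h t \<omega>) c) \<le> mu / (1 - S) + \<delta>
           + c * (real mm * measure M {\<omega>\<in>space M. h 0 \<omega> > L} + r ^ d * (real mm * L) / \<delta>)"
    by (rule key_ineq[OF S1 c \<delta> L _ r0 _ Sr]) (use r1 in \<open>auto simp: d_def\<close>)
  have b1: "c * (real mm * measure M {\<omega>\<in>space M. h 0 \<omega> > L}) \<le> \<delta>"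
  proof -
    have "c * (real mm * measure M {\<omega>\<in>space M. h 0 \<omega> > L}) \<le> c * (real mm * (\<delta> / (c * real mm)))"
      using pL c mmr by (intro mult_left_mono) auto
    also have "\<dots> = \<delta>" using c mmr by simp
    finally show ?thesis .
  qed
  have b2: "c * (r ^ d * (real mm * L) / \<delta>) \<le> \<delta>"
  proof -
    have "c * (r ^ d * (real mm * L) / \<delta>) = r ^ d * (c * real mm * L / \<delta>)" by simp
    also have "\<dots> \<le> (\<delta> * \<delta> / (c * real mm * L)) * (c * real mm * L / \<delta>)"
      using rd c mmr L \<delta> by (intro mult_right_mono) auto
    also have "\<dots> = \<delta>" using c mmr L \<delta> by (simp add: field_simps)
    finally show ?thesis .
  qed
  have "c * (real mm * measure M {\<omega>\<in>space M. h 0 \<omega> > L} + r ^ d * (real mm * L) / \<delta>)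
     = c * (real mm * measure M {\<omega>\<in>space M. h 0 \<omega> > L}) + c * (r ^ d * (real mm * L) / \<delta>)"
    by (simp add: distrib_left)
  then show "integral\<^sup>L M (\<lambda>\<omega>. min (h t \<omega>) c) \<le> mu / (1 - S) + e"
    using key b1 b2 by (simp add: \<delta>_def)
qed

lemma part2:
  assumes S1: "S < 1"
  shows "integrable M (h t)"
proof -
  define f where "f = (\<lambda>n::nat. \<lambda>\<omega>. min (h t \<omega>) (real (Suc n)))"
  have fi: "integrable M (f n)" for n
    unfolding f_def
  proof (rule integrable_const_bound[where B="real (Suc n)"])
    show "AE x in M. norm (min (h t x) (real (Suc n))) \<le> real (Suc n)"
      by (rule AE_I2) (use h_nonneg in auto)
  qed (use h_meas in auto)
  have mono: "\<And>x. mono (\<lambda>n. f n x)" unfolding f_def mono_def by (auto intro: min.mono)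
  have incI: "incseq (\<lambda>n. integral\<^sup>L M (f n))"
  proof -
    have fi': "\<And>n. integrable M (\<lambda>\<omega>. min (h t \<omega>) (1 + real n))" using fi by (simp add: f_def)
    show ?thesis
      unfolding incseq_def by (auto intro!: integral_mono fi' simp: f_def intro: min.mono)
  qed
  have bdd: "bdd_above (range (\<lambda>n. integral\<^sup>L M (f n)))"
    using min_bound[OF S1] by (auto simp: f_def intro!: bdd_aboveI[where M="mu / (1 - S)"])
  show ?thesis
  proof (rule integral_monotone_convergence_nonneg(1)[where f=f])
    show "\<And>i. integrable M (f i)" by (rule fi)
    show "AE x in M. mono (\<lambda>n. f n x)" using mono by simp
    show "\<And>i. AE x in M. 0 \<le> f i x" using h_nonneg by (auto simp: f_def)
    show "AE x in M. (\<lambda>i. f i x) \<longlonglongrightarrow> h t x"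
    proof (rule AE_I2, rule tendsto_eventually)
      fix x
      obtain N :: nat where N: "h t x \<le> real N" using real_arch_simple by blast
      show "\<forall>\<^sub>F i in sequentially. f i x = h t x"
        unfolding eventually_sequentially using N by (auto simp: f_def intro!: exI[of _ N])
    qed
    show "(\<lambda>i. integral\<^sup>L M (f i)) \<longlonglongrightarrow> (SUP i. integral\<^sup>L M (f i))"
      by (rule LIMSEQ_incseq_SUP[OF bdd incI])
    show "h t \<in> borel_measurable M" by (rule h_meas)
  qed
qed

end

theorem theorem4:
  fixes M :: "'a measure"
    and p q w :: nat
    and mu k :: real
    and \<alpha> \<beta> \<gamma> :: "nat \<Rightarrow> real"
    and eps eta h :: "int \<Rightarrow> 'a \<Rightarrow> real"
    and t :: int
  assumes prob: "prob_space M"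
    and p_pos: "p > 0" and q_pos: "q > 0"
    and mu_pos: "mu > 0" and k_pos: "k > 0"
    and \<alpha>_pos: "\<And>i. 1 \<le> i \<Longrightarrow> i \<le> p \<Longrightarrow> \<alpha> i > 0"
    and \<beta>_pos: "\<And>i. 1 \<le> i \<Longrightarrow> i \<le> q \<Longrightarrow> \<beta> i > 0"
    and \<gamma>_pos: "\<And>i. 1 \<le> i \<Longrightarrow> i \<le> w \<Longrightarrow> \<gamma> i > 0"
    and eps_distr: "\<And>s. distributed M lborel (eps s) (\<lambda>x. ennreal (std_normal_density x))"
    and eta_distr: "\<And>s. distributed M lborel (eta s) (\<lambda>x. ennreal (gamma_density k x))"
    and indep_innov: "prob_space.indep_vars M (\<lambda>_. borel)
                        (\<lambda>j. case j of Inl s \<Rightarrow> eps s | Inr s \<Rightarrow> eta s) (UNIV :: (int + int) set)"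
    and h_meas: "\<And>s. h s \<in> borel_measurable M"
    and h_nonneg: "\<And>s \<omega>. \<omega> \<in> space M \<Longrightarrow> h s \<omega> \<ge> 0"
    and indep_past: "\<And>s. prob_space.indep_set M
                        (sets (vimage_algebra (space M) (\<lambda>\<omega>. (eps s \<omega>, eta s \<omega>)) (borel \<Otimes>\<^sub>M borel)))
                        (sets (vimage_algebra (space M) (\<lambda>\<omega>. restrict (\<lambda>u. h u \<omega>) {..s})
                                (PiM {..s} (\<lambda>_. borel))))"
    and recursion: "\<And>s \<omega>. \<omega> \<in> space M \<Longrightarrow>
          h s \<omega> = mu
            + (\<Sum>i=1..p. \<alpha> i * \<bar>h (s - int i) \<omega> * eps (s - int i) \<omega>\<bar>)
            + (\<Sum>i=1..q. \<beta> i * (h (s - int i) \<omega> * eta (s - int i) \<omega>))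
            + (\<Sum>i=1..w. \<gamma> i * h (s - int i) \<omega>)"
    and stationary: "\<And>s. distr M borel (h s) = distr M borel (h 0)"
  shows "(integrable M (h t) \<longleftrightarrow>
           (\<Sum>i=1..max p (max q w). integral\<^sup>L M (igarch_x p q w \<alpha> \<beta> \<gamma> eps eta i t)) < 1)
     \<and> ((\<Sum>i=1..max p (max q w). integral\<^sup>L M (igarch_x p q w \<alpha> \<beta> \<gamma> eps eta i t)) < 1 \<longrightarrow>
           integral\<^sup>L M (h t) =
             mu / (1 - (\<Sum>i=1..max p (max q w). integral\<^sup>L M (igarch_x p q w \<alpha> \<beta> \<gamma> eps eta i t)))
         \<and> integrable M (\<lambda>\<omega>. h t \<omega> * eps t \<omega>)
         \<and> integrable M (\<lambda>\<omega>. h t \<omega> * eta t \<omega>)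
         \<and> interval_expectation M (\<lambda>\<omega>. h t \<omega> * eps t \<omega>) (\<lambda>\<omega>. h t \<omega> * eta t \<omega>)
             = (- k * integral\<^sup>L M (h t), k * integral\<^sup>L M (h t)))"
proof -
  interpret igarch M p q w mu k \<alpha> \<beta> \<gamma> eps eta h
    by (rule igarch.intro[OF prob igarch_axioms.intro[OF p_pos mu_pos k_pos \<alpha>_pos \<beta>_pos \<gamma>_pos
        eps_distr eta_distr indep_innov h_meas h_nonneg indep_past recursion stationary]])
  have Seq: "(\<Sum>i=1..max p (max q w). integral\<^sup>L M (igarch_x p q w \<alpha> \<beta> \<gamma> eps eta i t)) = S"
    unfolding S_def mm_def using A_int(2) by (simp add: A_def)
  show ?thesis
    unfolding Seq using part1 part2 part_interval by blast
qed

end
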